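(* Let $L$ be a Lie superalgebra of the type $S(t)$. Then $\overline{exp}^{gr}(L)=\limsup_{n\to\infty}\sqrt[n]{c_n^{gr}(L)}\le 2t$ for even $t$, and $\overline{exp}^{gr}(L)\le 2t-1$ for odd $t$.
   Context: $F$ is a field of characteristic zero. For a $\mathbb Z_2$-graded algebra $L=L_0\oplus L_1$, let $P_{k,n-k}$ be the space of multilinear nonassociative polynomials in even variables $x_1,\dots,x_k$ and odd variables $y_1,\dots,y_{n-k}$ of the absolutely free $\mathbb Z_2$-graded algebra, $Id^{gr}(L)$ the ideal of graded identities of $L$, $c_{k,n-k}(L)=\dim P_{k,n-k}/(P_{k,n-k}\cap Id^{gr}(L))$, and $c_n^{gr}(L)=\sum_{k=0}^n\binom nk c_{k,n-k}(L)$. Superalgebra $S(t)$, $t\ge 2$: take $R=UT_t(F)$ with an involution $\ast$, either orthogonal $e_{ij}^\circ=e_{t+1-j,t+1-i}$, or (for $t=2m$) symplectic $X^s=DX^\circ D^{-1}$, $D=\mathrm{diag}(E,-E)$ with $E$ the $m\times m$ identity. With $R^\pm$ the symmetric/skew elements, $S(t)=\{\begin{pmatrix} x& y\\ z& -x^\ast\end{pmatrix}: x\in R, y\in R^+, z\in R^-\}$, even part block-diagonal, odd part block-off-diagonal, with the supercommutator product. *)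

theory Defs
  imports Complex_Main "HOL-Library.Liminf_Limsup" "HOL-Library.Extended_Real"
begin

text \<open>Square matrices over a field are represented as functions nat => nat => 'f;
  an N x N matrix is supported on indices below N.\<close>

type_synonym 'f mat = "nat \<Rightarrow> nat \<Rightarrow> 'f"

definition mmul :: "nat \<Rightarrow> 'f::field mat \<Rightarrow> 'f mat \<Rightarrow> 'f mat" where
  "mmul N a b = (\<lambda>i j. \<Sum>l<N. a i l * b l j)"

definition mneg :: "'f::field mat \<Rightarrow> 'f mat" where
  "mneg a = (\<lambda>i j. - a i j)"

text \<open>Variables are indexed by naturals 0..n-1; in P_{k,n-k} variable i is even
  (x_{i+1}) if i < k and odd (y_{i-k+1}) if k \<le> i < n.\<close>

datatype mon = Var nat | Mul mon mon

fun leaves :: "mon \<Rightarrow> nat list" where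
  "leaves (Var i) = [i]"
| "leaves (Mul a b) = leaves a @ leaves b"

definition MLmon :: "nat \<Rightarrow> mon set" where
  "MLmon n = {m. distinct (leaves m) \<and> set (leaves m) = {0..<n}}"

text \<open>The space P_{k,n-k}: linear combinations of multilinear monomials of degree n.\<close>
definition Ppoly :: "nat \<Rightarrow> (mon \<Rightarrow> 'f::field) set" where
  "Ppoly n = {f. \<forall>m. m \<notin> MLmon n \<longrightarrow> f m = 0}"

text \<open>Number of odd variables in a monomial (determines its Z2-degree).\<close>
fun oddcnt :: "nat \<Rightarrow> mon \<Rightarrow> nat" where
  "oddcnt k (Var i) = (if k \<le> i then 1 else 0)"
| "oddcnt k (Mul a b) = oddcnt k a + oddcnt k b"

text \<open>Evaluation of a monomial in an algebra of N x N matrices with the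
  supercommutator product [a,b] = ab - (-1)^{|a||b|} ba (homogeneous arguments).\<close>
fun evm :: "nat \<Rightarrow> nat \<Rightarrow> (nat \<Rightarrow> 'f::field mat) \<Rightarrow> mon \<Rightarrow> 'f mat" where
  "evm N k s (Var i) = s i"
| "evm N k s (Mul a b) = (\<lambda>i j. mmul N (evm N k s a) (evm N k s b) i j
      - (-1) ^ (oddcnt k a * oddcnt k b) * mmul N (evm N k s b) (evm N k s a) i j)"

definition evalP :: "nat \<Rightarrow> nat \<Rightarrow> nat \<Rightarrow> (nat \<Rightarrow> 'f::field mat) \<Rightarrow> (mon \<Rightarrow> 'f) \<Rightarrow> 'f mat" where
  "evalP N k n s f = (\<lambda>i j. \<Sum>m\<in>MLmon n. f m * evm N k s m i j)"

text \<open>f belongs to P_{k,n-k} \<inter> Id^gr(L), L = L0 \<oplus> L1 a superalgebra of N x N matrices.\<close>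
definition graded_identity ::
  "nat \<Rightarrow> 'f::field mat set \<Rightarrow> 'f mat set \<Rightarrow> nat \<Rightarrow> nat \<Rightarrow> (mon \<Rightarrow> 'f) \<Rightarrow> bool" where
  "graded_identity N L0 L1 k n f \<longleftrightarrow> f \<in> Ppoly n \<and>
     (\<forall>s. (\<forall>i<k. s i \<in> L0) \<and> (\<forall>i. k \<le> i \<and> i < n \<longrightarrow> s i \<in> L1)
          \<longrightarrow> evalP N k n s f = (\<lambda>i j. 0))"

definition indep_mod ::
  "nat \<Rightarrow> 'f::field mat set \<Rightarrow> 'f mat set \<Rightarrow> nat \<Rightarrow> nat \<Rightarrow> (mon \<Rightarrow> 'f) set \<Rightarrow> bool" where
  "indep_mod N L0 L1 k n B \<longleftrightarrow> B \<subseteq> Ppoly n \<and> finite B \<and>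
     (\<forall>a. graded_identity N L0 L1 k n (\<lambda>m. \<Sum>b\<in>B. a b * b m) \<longrightarrow> (\<forall>b\<in>B. a b = 0))"

text \<open>c_{k,n-k}(L) = dim P_{k,n-k} / (P_{k,n-k} \<inter> Id^gr(L)).\<close>
definition codim :: "nat \<Rightarrow> 'f::field mat set \<Rightarrow> 'f mat set \<Rightarrow> nat \<Rightarrow> nat \<Rightarrow> nat" where
  "codim N L0 L1 k n = Max {card B | B. indep_mod N L0 L1 k n B}"

definition cgr :: "nat \<Rightarrow> 'f::field mat set \<Rightarrow> 'f mat set \<Rightarrow> nat \<Rightarrow> nat" where
  "cgr N L0 L1 n = (\<Sum>k\<le>n. (n choose k) * codim N L0 L1 k n)"

definition grexp_upper :: "nat \<Rightarrow> 'f::field mat set \<Rightarrow> 'f mat set \<Rightarrow> ereal" where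
  "grexp_upper N L0 L1 = limsup (\<lambda>n. ereal (root n (real (cgr N L0 L1 n))))"

datatype invkind = Orth | Symp

definition UT :: "nat \<Rightarrow> 'f::field mat \<Rightarrow> bool" where
  "UT t x \<longleftrightarrow> (\<forall>i j. (t \<le> i \<or> t \<le> j \<or> j < i) \<longrightarrow> x i j = 0)"

text \<open>Orthogonal involution e_{ij} \<mapsto> e_{t+1-j,t+1-i} (0-indexed: (i,j) \<mapsto> (t-1-j,t-1-i)).\<close>
definition orth_inv :: "nat \<Rightarrow> 'f::field mat \<Rightarrow> 'f mat" where
  "orth_inv t x = (\<lambda>i j. if i < t \<and> j < t then x (t - 1 - j) (t - 1 - i) else 0)"

text \<open>Symplectic involution X \<mapsto> D X^o D^{-1}, D = diag(E,-E), t = 2m.\<close>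
definition dsign :: "nat \<Rightarrow> nat \<Rightarrow> 'f::field" where
  "dsign t i = (if i < t div 2 then 1 else -1)"

definition symp_inv :: "nat \<Rightarrow> 'f::field mat \<Rightarrow> 'f mat" where
  "symp_inv t x = (\<lambda>i j. dsign t i * orth_inv t x i j * dsign t j)"

definition invol :: "invkind \<Rightarrow> nat \<Rightarrow> 'f::field mat \<Rightarrow> 'f mat" where
  "invol \<iota> t = (case \<iota> of Orth \<Rightarrow> orth_inv t | Symp \<Rightarrow> symp_inv t)"

definition Rplus :: "invkind \<Rightarrow> nat \<Rightarrow> 'f::field mat set" where
  "Rplus \<iota> t = {x. UT t x \<and> invol \<iota> t x = x}"

definition Rminus :: "invkind \<Rightarrow> nat \<Rightarrow> 'f::field mat set" where
  "Rminus \<iota> t = {x. UT t x \<and> invol \<iota> t x = mneg x}"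

definition block :: "nat \<Rightarrow> 'f::field mat \<Rightarrow> 'f mat \<Rightarrow> 'f mat \<Rightarrow> 'f mat \<Rightarrow> 'f mat" where
  "block t x y z w = (\<lambda>i j.
     if i < t \<and> j < t then x i j
     else if i < t \<and> t \<le> j \<and> j < 2*t then y i (j - t)
     else if t \<le> i \<and> i < 2*t \<and> j < t then z (i - t) j
     else if t \<le> i \<and> i < 2*t \<and> t \<le> j \<and> j < 2*t then w (i - t) (j - t)
     else 0)"

definition S0 :: "invkind \<Rightarrow> nat \<Rightarrow> 'f::field mat set" where
  "S0 \<iota> t = {block t x (\<lambda>i j. 0) (\<lambda>i j. 0) (mneg (invol \<iota> t x)) | x. UT t x}"

definition S1 :: "invkind \<Rightarrow> nat \<Rightarrow> 'f::field mat set" where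
  "S1 \<iota> t = {block t (\<lambda>i j. 0) y z (\<lambda>i j. 0) | y z. y \<in> Rplus \<iota> t \<and> z \<in> Rminus \<iota> t}"

end

theory Submission
  imports Defs "HOL-Library.FuncSet"
begin
lemma evm_cong: "(\<forall>i\<in>set (leaves m). s i = s' i) \<Longrightarrow> evm N k s m = evm N k s' m"
  by (induction m) auto

lemma mmul_lin_l: "mmul N (\<lambda>i j. a * X i j + Y i j) B = (\<lambda>i j. a * mmul N X B i j + mmul N Y B i j)"
  by (auto simp: mmul_def sum_distrib_left sum.distrib algebra_simps intro!: ext)

lemma mmul_lin_r: "mmul N B (\<lambda>i j. a * X i j + Y i j) = (\<lambda>i j. a * mmul N B X i j + mmul N B Y i j)"
  by (auto simp: mmul_def sum_distrib_left sum.distrib algebra_simps intro!: ext)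

lemma evm_lin:
  "distinct (leaves m) \<Longrightarrow> r \<in> set (leaves m) \<Longrightarrow>
   evm N k (s(r := (\<lambda>i j. a * X i j + Y i j))) m =
   (\<lambda>i j. a * evm N k (s(r := X)) m i j + evm N k (s(r := Y)) m i j)"
proof (induction m)
  case (Var x)
  then show ?case by auto
next
  case (Mul m1 m2)
  show ?case
  proof (cases "r \<in> set (leaves m1)")
    case True
    then have nr: "r \<notin> set (leaves m2)" using Mul.prems by auto
    have e2: "evm N k (s(r := Z)) m2 = evm N k s m2" for Z
      by (rule evm_cong) (use nr in auto)
    have IH: "evm N k (s(r := (\<lambda>i j. a * X i j + Y i j))) m1 =
      (\<lambda>i j. a * evm N k (s(r := X)) m1 i j + evm N k (s(r := Y)) m1 i j)"
      by (rule Mul.IH(1)) (use Mul.prems True in auto)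
    show ?thesis
      by (simp only: evm.simps e2 IH mmul_lin_l mmul_lin_r) (simp add: algebra_simps)
  next
    case False
    then have nr: "r \<in> set (leaves m2)" using Mul.prems by auto
    have e1: "evm N k (s(r := Z)) m1 = evm N k s m1" for Z
      by (rule evm_cong) (use False in auto)
    have IH: "evm N k (s(r := (\<lambda>i j. a * X i j + Y i j))) m2 =
      (\<lambda>i j. a * evm N k (s(r := X)) m2 i j + evm N k (s(r := Y)) m2 i j)"
      by (rule Mul.IH(2)) (use Mul.prems nr in auto)
    show ?thesis
      by (simp only: evm.simps e1 IH mmul_lin_l mmul_lin_r) (simp add: algebra_simps)
  qed
qed

lemma MLmon_leaf: "m \<in> MLmon n \<Longrightarrow> r < n \<Longrightarrow> distinct (leaves m) \<and> r \<in> set (leaves m)"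
  by (auto simp: MLmon_def)

lemma evalP_lin_s:
  assumes "r < n"
  shows "evalP N k n (s(r := (\<lambda>i j. a * X i j + Y i j))) f =
   (\<lambda>i j. a * evalP N k n (s(r := X)) f i j + evalP N k n (s(r := Y)) f i j)"
  unfolding evalP_def
proof (intro ext)
  fix i j
  have "(\<Sum>m\<in>MLmon n. f m * evm N k (s(r := (\<lambda>i j. a * X i j + Y i j))) m i j)
      = (\<Sum>m\<in>MLmon n. a * (f m * evm N k (s(r := X)) m i j) + f m * evm N k (s(r := Y)) m i j)"
  proof (rule sum.cong)
    fix m assume "m \<in> MLmon n"
    from MLmon_leaf[OF this assms] show "f m * evm N k (s(r := (\<lambda>i j. a * X i j + Y i j))) m i j
       = a * (f m * evm N k (s(r := X)) m i j) + f m * evm N k (s(r := Y)) m i j"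
      by (simp only: evm_lin) (simp add: algebra_simps)
  qed simp
  then show "(\<Sum>m\<in>MLmon n. f m * evm N k (s(r := (\<lambda>i j. a * X i j + Y i j))) m i j)
      = a * (\<Sum>m\<in>MLmon n. f m * evm N k (s(r := X)) m i j) + (\<Sum>m\<in>MLmon n. f m * evm N k (s(r := Y)) m i j)"
    by (simp add: sum.distrib sum_distrib_left)
qed

lemma evalP_lin_f:
  "evalP N k n s (\<lambda>m. \<Sum>b\<in>B. a b * b m) = (\<lambda>i j. \<Sum>b\<in>B. a b * evalP N k n s b i j)"
  unfolding evalP_def
proof (intro ext)
  fix i j
  have "(\<Sum>m\<in>MLmon n. (\<Sum>b\<in>B. a b * b m) * evm N k s m i j)
     = (\<Sum>m\<in>MLmon n. \<Sum>b\<in>B. a b * (b m * evm N k s m i j))"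
    by (simp add: sum_distrib_right mult.assoc)
  also have "\<dots> = (\<Sum>b\<in>B. \<Sum>m\<in>MLmon n. a b * (b m * evm N k s m i j))"
    by (rule sum.swap)
  also have "\<dots> = (\<Sum>b\<in>B. a b * (\<Sum>m\<in>MLmon n. b m * evm N k s m i j))"
    by (simp add: sum_distrib_left)
  finally show "(\<Sum>m\<in>MLmon n. (\<Sum>b\<in>B. a b * b m) * evm N k s m i j)
     = (\<Sum>b\<in>B. a b * (\<Sum>m\<in>MLmon n. b m * evm N k s m i j))" .
qed

definition psi :: "nat \<Rightarrow> nat \<Rightarrow> nat" where
  "psi t p = 2 * (if p < t then p else p - t) + (if odd t \<and> p = t + t div 2 then 1 else 0)"

definition QQ :: "nat \<Rightarrow> nat \<Rightarrow> 'f::field mat \<Rightarrow> bool" where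
  "QQ t r M \<longleftrightarrow> (\<forall>i j. M i j \<noteq> 0 \<longrightarrow> i < 2*t \<and> j < 2*t \<and> psi t i + r \<le> psi t j)"

lemma QQ_mmul:
  assumes "QQ t ra A" "QQ t rb B"
  shows "QQ t (ra + rb) (mmul (2*t) A B)"
  unfolding QQ_def
proof (intro allI impI)
  fix i j assume "mmul (2*t) A B i j \<noteq> 0"
  then obtain l where "l < 2*t" "A i l * B l j \<noteq> 0"
    unfolding mmul_def by (meson lessThan_iff sum.neutral)
  then have "A i l \<noteq> 0" "B l j \<noteq> 0" by auto
  with assms show "i < 2*t \<and> j < 2*t \<and> psi t i + (ra + rb) \<le> psi t j"
    unfolding QQ_def by fastforce
qed

lemma QQ_diff:
  assumes "QQ t r A" "QQ t r B"
  shows "QQ t r (\<lambda>i j. A i j - c * B i j)"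
  using assms unfolding QQ_def by (metis diff_zero mult_zero_right)

lemma evm_QQ:
  assumes "\<forall>i\<in>set (leaves m). QQ t 0 (s i)"
  shows "QQ t (length (filter (\<lambda>i. QQ t 1 (s i)) (leaves m))) (evm (2*t) k s m)"
  using assms
proof (induction m)
  case (Var x)
  then show ?case by auto
next
  case (Mul m1 m2)
  let ?c1 = "length (filter (\<lambda>i. QQ t 1 (s i)) (leaves m1))"
  let ?c2 = "length (filter (\<lambda>i. QQ t 1 (s i)) (leaves m2))"
  have h1: "QQ t ?c1 (evm (2*t) k s m1)" using Mul by auto
  have h2: "QQ t ?c2 (evm (2*t) k s m2)" using Mul by auto
  have a: "QQ t (?c1 + ?c2) (mmul (2*t) (evm (2*t) k s m1) (evm (2*t) k s m2))"
    by (rule QQ_mmul[OF h1 h2])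
  have b: "QQ t (?c1 + ?c2) (mmul (2*t) (evm (2*t) k s m2) (evm (2*t) k s m1))"
    using QQ_mmul[OF h2 h1] by (simp add: add.commute)
  show ?case using QQ_diff[OF a b] by simp
qed

lemma psi_le: "p < 2*t \<Longrightarrow> psi t p \<le> 2*t - 1"
  unfolding psi_def by (auto split: if_splits; presburger)

lemma QQ_big_zero:
  assumes "QQ t r (M::'f::field mat)" "2*t \<le> r"
  shows "M = (\<lambda>i j. 0)"
proof (intro ext)
  fix i j
  show "M i j = 0"
  proof (rule ccontr)
    assume "M i j \<noteq> 0"
    with assms(1) have "j < 2*t" "psi t i + r \<le> psi t j" unfolding QQ_def by auto
    with psi_le[of j t] assms(2) show False by linarith
  qed
qed

lemma indep_card:
  fixes v :: "'b \<Rightarrow> 'd \<Rightarrow> 'f::field"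
  assumes "finite D" "finite B"
    and "\<forall>a. (\<forall>d\<in>D. (\<Sum>b\<in>B. a b * v b d) = 0) \<longrightarrow> (\<forall>b\<in>B. a b = 0)"
  shows "card B \<le> card D"
  using assms
proof (induction D arbitrary: B v rule: finite_induct)
  case empty
  from empty.prems(2)[rule_format, of "\<lambda>_. 1"] have "B = {}" by auto
  then show ?case by simp
next
  case (insert d D)
  show ?case
  proof (cases "\<forall>b\<in>B. v b d = 0")
    case True
    have "card B \<le> card D"
    proof (rule insert.IH[OF insert.prems(1)], intro allI impI)
      fix a assume h: "\<forall>e\<in>D. (\<Sum>b\<in>B. a b * v b e) = 0"
      have "\<forall>e\<in>insert d D. (\<Sum>b\<in>B. a b * v b e) = 0"
        using h True by auto
      then show "\<forall>b\<in>B. a b = 0" using insert.prems(2) by blast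
    qed
    then show ?thesis using insert.hyps by simp
  next
    case False
    then obtain b0 where b0: "b0 \<in> B" "v b0 d \<noteq> 0" by auto
    define B' where "B' = B - {b0}"
    define v' where "v' b e = v b e - (v b d / v b0 d) * v b0 e" for b e
    have fB': "finite B'" using insert.prems(1) B'_def by simp
    have "card B' \<le> card D"
    proof (rule insert.IH[OF fB'], intro allI impI)
      fix a' assume h: "\<forall>e\<in>D. (\<Sum>b\<in>B'. a' b * v' b e) = 0"
      define c where "c = (\<Sum>b\<in>B'. a' b * (v b d / v b0 d))"
      define a where "a b = (if b = b0 then - c else a' b)" for b
      have split: "(\<Sum>b\<in>B. a b * v b e) = a b0 * v b0 e + (\<Sum>b\<in>B'. a b * v b e)" for e
        unfolding B'_def using insert.prems(1) b0(1) by (simp add: sum.remove)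
      have eq: "(\<Sum>b\<in>B. a b * v b e) = (\<Sum>b\<in>B'. a' b * v' b e)" for e
      proof -
        have "(\<Sum>b\<in>B'. a b * v b e) = (\<Sum>b\<in>B'. a' b * v b e)"
          by (rule sum.cong) (auto simp: a_def B'_def)
        moreover have "(\<Sum>b\<in>B'. a' b * v' b e) = (\<Sum>b\<in>B'. a' b * v b e) - c * v b0 e"
          by (simp add: v'_def c_def right_diff_distrib sum_subtractf sum_distrib_right mult.assoc)
        ultimately show ?thesis using split[of e] by (simp add: a_def)
      qed
      have zd: "(\<Sum>b\<in>B'. a' b * v' b d) = 0"
        using b0(2) by (simp add: v'_def)
      have "\<forall>e\<in>insert d D. (\<Sum>b\<in>B. a b * v b e) = 0"
        using h zd eq by auto
      then have "\<forall>b\<in>B. a b = 0" using insert.prems(2) by blast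
      then show "\<forall>b\<in>B'. a' b = 0" unfolding B'_def by (metis DiffD1 DiffD2 a_def singletonI)
    qed
    moreover have "card B = Suc (card B')"
      using insert.prems(1) b0(1) B'_def by (metis card_Suc_Diff1)
    ultimately show ?thesis using insert.hyps by simp
  qed
qed

lemma psi_lo: "p < t \<Longrightarrow> psi t p = 2 * p"
  unfolding psi_def by auto

lemma psi_hi: "t \<le> p \<Longrightarrow> p < 2*t \<Longrightarrow> 2 * (p - t) \<le> psi t p \<and> psi t p \<le> 2 * (p - t) + 1"
  unfolding psi_def by auto

lemma psi_hi_eq: "l < t \<Longrightarrow> \<not> (odd t \<and> l = t div 2) \<Longrightarrow> psi t (l + t) = 2 * l"
  unfolding psi_def by auto

lemma psi_mid: "odd t \<Longrightarrow> psi t (t + t div 2) = 2 * (t div 2) + 1"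
  unfolding psi_def by auto

lemma dsign_sq: "dsign t a * dsign t a = (1::'f::field)"
  unfolding dsign_def by auto

lemma invol_diag: "a < t \<Longrightarrow> invol \<iota> t x a a = x (t - 1 - a) (t - 1 - a)"
  unfolding invol_def orth_inv_def symp_inv_def
  by (cases \<iota>) (auto simp: mult.commute[of "dsign t a"] mult.assoc dsign_sq)

lemma invol_nz: "a < t \<Longrightarrow> b < t \<Longrightarrow> invol \<iota> t x a b \<noteq> 0 \<Longrightarrow> x (t - 1 - b) (t - 1 - a) \<noteq> 0"
  unfolding invol_def orth_inv_def symp_inv_def
  by (cases \<iota>) auto

definition F0 :: "nat \<Rightarrow> 'f::field mat \<Rightarrow> 'f mat" where
  "F0 t x = (\<lambda>i j. if i = j \<and> i < t then x i i
     else if i = j \<and> t \<le> i \<and> i < 2*t then - x (2*t-1-i) (2*t-1-i) else 0)"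

lemma S0_entry:
  assumes "UT t x" "i \<noteq> j \<or> \<not> i < 2*t"
    and "block t x (\<lambda>i j. 0) (\<lambda>i j. 0) (mneg (invol \<iota> t x)) i j \<noteq> (0::'f::field)"
  shows "i < 2*t \<and> j < 2*t \<and> psi t i < psi t j"
proof -
  consider (a) "i < t" "j < t" | (b) "t \<le> i" "i < 2*t" "t \<le> j" "j < 2*t"
    | (c) "(i < t \<and> t \<le> j) \<or> (t \<le> i \<and> j < t) \<or> 2*t \<le> i \<or> 2*t \<le> j" by linarith
  then show ?thesis
  proof cases
    case a
    then have "x i j \<noteq> 0" using assms(3) by (simp add: block_def)
    with assms(1) have "i \<le> j" unfolding UT_def by (meson not_le)
    with assms(2) a show ?thesis by (simp add: psi_lo)
  next
    case b
    then have "invol \<iota> t x (i - t) (j - t) \<noteq> 0" using assms(3) by (simp add: block_def mneg_def)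
    then have "x (t - 1 - (j - t)) (t - 1 - (i - t)) \<noteq> 0" using b by (intro invol_nz) auto
    with assms(1) have "t - 1 - (j - t) \<le> t - 1 - (i - t)" unfolding UT_def by (meson not_le)
    with assms(2) b have "i < j" by linarith
    with b psi_hi[of t i] psi_hi[of t j] show ?thesis by linarith
  next
    case c
    then show ?thesis using assms(3) by (auto simp: block_def split: if_splits)
  qed
qed

lemma S0_diag:
  assumes "i < 2*t"
  shows "block t x (\<lambda>i j. 0) (\<lambda>i j. 0) (mneg (invol \<iota> t x)) i i = F0 t x i i"
proof (cases "i < t")
  case True then show ?thesis by (simp add: block_def F0_def)
next
  case False
  then have "i - t < t" using assms by auto
  moreover have "t - 1 - (i - t) = 2*t - 1 - i" using False assms by auto
  ultimately show ?thesis using False assms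
    by (simp add: block_def F0_def mneg_def invol_diag)
qed

lemma S0_rem:
  assumes "UT t x" "block t x (\<lambda>i j. 0) (\<lambda>i j. 0) (mneg (invol \<iota> t x)) i j - F0 t x i j \<noteq> (0::'f::field)"
  shows "i < 2*t \<and> j < 2*t \<and> psi t i < psi t j"
proof (cases "i = j \<and> i < 2*t")
  case True
  then show ?thesis using assms(2) S0_diag[of i t x \<iota>] by simp
next
  case False
  then have "F0 t x i j = 0" unfolding F0_def by auto
  then show ?thesis using assms False S0_entry[of t x i j \<iota>] by auto
qed

definition F1 :: "nat \<Rightarrow> 'f::field mat \<Rightarrow> 'f mat \<Rightarrow> 'f mat" where
  "F1 t y z = (\<lambda>i j. if i < t \<and> j = i + t then
        (if 2*i+1 < t then y i i else if t < 2*i+1 then y (t-1-i) (t-1-i) else 0)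
     else if j < t \<and> i = j + t then
        (if 2*j+1 < t then z j j else if t < 2*j+1 then - z (t-1-j) (t-1-j) else 0)
     else 0)"

lemma Rplus_diag: "y \<in> Rplus \<iota> t \<Longrightarrow> a < t \<Longrightarrow> y (t-1-a) (t-1-a) = y a a"
  unfolding Rplus_def using invol_diag[of a t \<iota> y] by (metis (mono_tags) mem_Collect_eq)

lemma Rminus_diag: "z \<in> Rminus \<iota> t \<Longrightarrow> a < t \<Longrightarrow> z (t-1-a) (t-1-a) = - z a a"
  unfolding Rminus_def using invol_diag[of a t \<iota> z] by (auto simp: mneg_def)

lemma neg_self_zero: "(a::'f::field_char_0) = - a \<Longrightarrow> a = 0"
  by simp

lemma S1_rem:
  assumes "y \<in> Rplus \<iota> t" "z \<in> Rminus \<iota> t"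
    and "block t (\<lambda>i j. 0) y z (\<lambda>i j. 0) i j - F1 t y z i j \<noteq> (0::'f::field_char_0)"
  shows "i < 2*t \<and> j < 2*t \<and> psi t i < psi t j"
proof -
  have uy: "UT t y" and uz: "UT t z" using assms(1,2) by (auto simp: Rplus_def Rminus_def)
  consider (a) "i < t" "j < t" | (b) "t \<le> i" "i < 2*t" "t \<le> j" "j < 2*t"
    | (c) "i < t" "t \<le> j" "j < 2*t" | (d) "t \<le> i" "i < 2*t" "j < t"
    | (e) "2*t \<le> i \<or> 2*t \<le> j" by linarith
  then show ?thesis
  proof cases
    case a
    then show ?thesis using assms(3) by (simp add: block_def F1_def)
  next
    case b
    then show ?thesis using assms(3) by (simp add: block_def F1_def)
  next
    case e
    then show ?thesis using assms(3) by (auto simp: block_def F1_def split: if_splits)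
  next
    case c
    show ?thesis
    proof (cases "j = i + t")
      case True
      have yd: "y (t-1-i) (t-1-i) = y i i" using Rplus_diag[OF assms(1)] c by simp
      have "2*i+1 = t"
      proof (rule ccontr)
        assume "2*i+1 \<noteq> t"
        then have "F1 t y z i j = y i i" using c True yd by (auto simp: F1_def)
        moreover have "block t (\<lambda>i j. 0) y z (\<lambda>i j. 0) i j = y i i" using c True by (simp add: block_def)
        ultimately show False using assms(3) by simp
      qed
      then have "odd t" "i = t div 2" by presburger+
      then show ?thesis using c True psi_lo[of i t] psi_mid[of t] by (simp add: add.commute)
    next
      case False
      then have "F1 t y z i j = 0" using c by (auto simp: F1_def)
      then have "y i (j - t) \<noteq> 0" using assms(3) c by (simp add: block_def)
      with uy have "i \<le> j - t" unfolding UT_def by (meson not_le)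
      with False c have "i < j - t" by linarith
      then show ?thesis using c psi_lo[of i t] psi_hi[of t j] by linarith
    qed
  next
    case d
    show ?thesis
    proof (cases "i = j + t")
      case True
      have zd: "z (t-1-j) (t-1-j) = - z j j" using Rminus_diag[OF assms(2)] d by simp
      have "2*j+1 = t"
      proof (rule ccontr)
        assume "2*j+1 \<noteq> t"
        then have "F1 t y z i j = z j j" using d True zd by (auto simp: F1_def)
        moreover have "block t (\<lambda>i j. 0) y z (\<lambda>i j. 0) i j = z j j" using d True by (simp add: block_def)
        ultimately show False using assms(3) by simp
      qed
      then have "t - 1 - j = j" by simp
      then have "z j j = 0" using zd neg_self_zero by metis
      moreover have "F1 t y z i j = 0" using d True \<open>2*j+1 = t\<close> by (auto simp: F1_def)
      moreover have "block t (\<lambda>i j. 0) y z (\<lambda>i j. 0) i j = z j j" using d True by (simp add: block_def)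
      ultimately show ?thesis using assms(3) by simp
    next
      case False
      then have "F1 t y z i j = 0" using d by (auto simp: F1_def)
      then have "z (i - t) j \<noteq> 0" using assms(3) d by (simp add: block_def)
      with uz have "i - t \<le> j" unfolding UT_def by (meson not_le)
      with False d have "i - t < j" by linarith
      then show ?thesis using d psi_lo[of j t] psi_hi[of t i] by linarith
    qed
  qed
qed

definition unitm :: "nat \<Rightarrow> nat \<Rightarrow> 'f::field mat" where
  "unitm p q = (\<lambda>i j. if i = p \<and> j = q then 1 else 0)"

definition Ea :: "nat \<Rightarrow> nat \<Rightarrow> 'f::field mat" where
  "Ea t l = (\<lambda>i j. if i = l \<and> j = l then 1 else if i = 2*t-1-l \<and> j = i then -1 else 0)"

definition Ya :: "nat \<Rightarrow> nat \<Rightarrow> 'f::field mat" where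
  "Ya t l = (\<lambda>i j. if (i = l \<and> j = l + t) \<or> (i = t-1-l \<and> j = 2*t-1-l) then 1 else 0)"

definition Za :: "nat \<Rightarrow> nat \<Rightarrow> 'f::field mat" where
  "Za t l = (\<lambda>i j. if i = l + t \<and> j = l then 1 else if i = 2*t-1-l \<and> j = t-1-l then -1 else 0)"

definition Lset :: "nat \<Rightarrow> nat set" where
  "Lset t = {l. 2*l+1 < t}"

definition Pairs :: "nat \<Rightarrow> (nat \<times> nat) set" where
  "Pairs t = {(p,q). p < 2*t \<and> q < 2*t \<and> psi t p < psi t q}"

definition inspan :: "'f::field mat set \<Rightarrow> 'f mat \<Rightarrow> bool" where
  "inspan G M \<longleftrightarrow> (\<exists>(I::(nat\<times>nat) set) \<phi> c. finite I \<and> \<phi> ` I \<subseteq> G \<and> M = (\<lambda>i j. \<Sum>x\<in>I. c x * \<phi> x i j))"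

lemma Lset_eq: "Lset t = {..<t div 2}"
proof -
  have "2*l+1 < t \<longleftrightarrow> l < t div 2" for l :: nat by presburger
  then show ?thesis unfolding Lset_def by auto
qed

lemma finite_Pairs: "finite (Pairs t)"
  by (rule finite_subset[of _ "{..<2*t} \<times> {..<2*t}"]) (auto simp: Pairs_def)

lemma inspan_nat:
  fixes A :: "nat set"
  assumes "finite A" "\<phi> ` A \<subseteq> G"
  shows "inspan G (\<lambda>i j. \<Sum>l\<in>A. c l * \<phi> l i j)"
  unfolding inspan_def
proof (rule exI[of _ "A \<times> {0}"], rule exI[of _ "\<lambda>x. \<phi> (fst x)"], rule exI[of _ "\<lambda>x. c (fst x)"], intro conjI)
  show "finite (A \<times> {0::nat})" using assms(1) by simp
  show "(\<lambda>x. \<phi> (fst x)) ` (A \<times> {0::nat}) \<subseteq> G" using assms(2) by auto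
  show "(\<lambda>i j. \<Sum>l\<in>A. c l * \<phi> l i j) = (\<lambda>i j. \<Sum>x\<in>A \<times> {0::nat}. c (fst x) * \<phi> (fst x) i j)"
  proof -
    have e: "A \<times> {0::nat} = (\<lambda>l. (l,0)) ` A" by auto
    show ?thesis unfolding e by (simp add: sum.reindex inj_on_def)
  qed
qed

lemma rem_span:
  assumes "\<forall>i j. R i j \<noteq> 0 \<longrightarrow> (i, j) \<in> Pairs t"
  shows "inspan ((\<lambda>(p,q). unitm p q) ` Pairs t) (R :: 'f::field mat)"
  unfolding inspan_def
proof (intro exI conjI)
  show "finite (Pairs t)" by (rule finite_Pairs)
  show "(\<lambda>(p, q). unitm p q) ` Pairs t \<subseteq> (\<lambda>(p, q). unitm p q) ` Pairs t" by simp
  show "R = (\<lambda>i j. \<Sum>x\<in>Pairs t. (case x of (p, q) \<Rightarrow> R p q) * (case x of (p, q) \<Rightarrow> unitm p q) i j)"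
  proof (intro ext)
    fix i j
    have "(\<Sum>x\<in>Pairs t. (case x of (p, q) \<Rightarrow> R p q) * (case x of (p, q) \<Rightarrow> unitm p q) i j)
       = (\<Sum>x\<in>Pairs t. if x = (i,j) then R i j else 0)"
      by (rule sum.cong) (auto simp: unitm_def split: if_splits)
    also have "\<dots> = R i j" using assms finite_Pairs[of t] by auto
    finally show "R i j = (\<Sum>x\<in>Pairs t. (case x of (p, q) \<Rightarrow> R p q) * (case x of (p, q) \<Rightarrow> unitm p q) i j)" by simp
  qed
qed

lemma Ea_term:
  assumes "l < t"
  shows "x l l * Ea t l i j = (if l = (if i < t then i else 2*t-1-i) then F0 t x i j else 0)"
proof -
  consider (c1) "i = j" "i < t" | (c2) "i = j" "t \<le> i" "i < 2*t" | (c3) "i \<noteq> j \<or> 2*t \<le> i" by linarith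
  then show ?thesis
  proof cases
    case c1
    have "i \<noteq> 2*t-1-l" using assms c1 by linarith
    then show ?thesis using c1 by (auto simp: Ea_def F0_def)
  next
    case c2
    have "i \<noteq> l" using assms c2 by linarith
    moreover have "i = 2*t-1-l \<longleftrightarrow> l = 2*t-1-i" using assms c2 by linarith
    ultimately show ?thesis using c2 by (auto simp: Ea_def F0_def)
  next
    case c3
    have "Ea t l i j = (0::'a)"
    proof -
      have "\<not> (i = l \<and> j = l)" using c3 assms by linarith
      moreover have "\<not> (i = 2*t-1-l \<and> j = i)" using c3 assms by linarith
      ultimately show ?thesis by (simp add: Ea_def)
    qed
    moreover have "F0 t x i j = 0" using c3 by (auto simp: F0_def)
    ultimately show ?thesis by simp
  qed
qed

lemma sum_Ea: "(\<Sum>l<t. x l l * Ea t l i j) = F0 t x i j"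
proof -
  define a where "a = (if i < t then i else 2*t-1-i)"
  have "(\<Sum>l<t. x l l * Ea t l i j) = (\<Sum>l<t. if l = a then F0 t x i j else 0)"
    by (rule sum.cong) (simp_all add: a_def Ea_term)
  also have "\<dots> = (if a < t then F0 t x i j else 0)" by simp
  also have "\<dots> = F0 t x i j"
    by (auto simp: a_def F0_def)
  finally show ?thesis .
qed

definition Fy :: "nat \<Rightarrow> 'f::field mat \<Rightarrow> 'f mat" where
  "Fy t y = (\<lambda>i j. if i < t \<and> j = i + t then
        (if 2*i+1 < t then y i i else if t < 2*i+1 then y (t-1-i) (t-1-i) else 0) else 0)"

definition Fz :: "nat \<Rightarrow> 'f::field mat \<Rightarrow> 'f mat" where
  "Fz t z = (\<lambda>i j. if j < t \<and> i = j + t then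
        (if 2*j+1 < t then z j j else if t < 2*j+1 then - z (t-1-j) (t-1-j) else 0) else 0)"

lemma F1_split: "F1 t y z i j = Fy t y i j + Fz t z i j"
  unfolding F1_def Fy_def Fz_def by auto

lemma Ya_term:
  assumes "2*l+1 < t"
  shows "y l l * Ya t l i j = (if l = (if 2*i+1 < t then i else t-1-i) then Fy t y i j else 0)"
proof -
  consider (c1) "i < t" "j = i + t" "2*i+1 < t" | (c2) "i < t" "j = i + t" "t < 2*i+1"
    | (c3) "\<not> (i < t \<and> j = i + t) \<or> 2*i+1 = t" by linarith
  then show ?thesis
  proof cases
    case c1
    have "\<not> (i = t-1-l \<and> j = 2*t-1-l)" using assms c1 by linarith
    then show ?thesis using c1 by (auto simp: Ya_def Fy_def)
  next
    case c2
    have "\<not> (i = l \<and> j = l + t)" using assms c2 by linarith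
    moreover have "(i = t-1-l \<and> j = 2*t-1-l) \<longleftrightarrow> l = t-1-i" using assms c2 by linarith
    ultimately show ?thesis using c2 by (auto simp: Ya_def Fy_def)
  next
    case c3
    have "\<not> (i = l \<and> j = l + t)" using assms c3 by linarith
    moreover have "\<not> (i = t-1-l \<and> j = 2*t-1-l)" using assms c3 by linarith
    ultimately have "Ya t l i j = (0::'a)" by (simp add: Ya_def)
    moreover have "Fy t y i j = 0" using c3 by (auto simp: Fy_def)
    ultimately show ?thesis by simp
  qed
qed

lemma Za_term:
  assumes "2*l+1 < t"
  shows "z l l * Za t l i j = (if l = (if 2*j+1 < t then j else t-1-j) then Fz t z i j else 0)"
proof -
  consider (c1) "j < t" "i = j + t" "2*j+1 < t" | (c2) "j < t" "i = j + t" "t < 2*j+1"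
    | (c3) "\<not> (j < t \<and> i = j + t) \<or> 2*j+1 = t" by linarith
  then show ?thesis
  proof cases
    case c1
    have "\<not> (i = 2*t-1-l \<and> j = t-1-l)" using assms c1 by linarith
    then show ?thesis using c1 by (auto simp: Za_def Fz_def)
  next
    case c2
    have "\<not> (i = l + t \<and> j = l)" using assms c2 by linarith
    moreover have "(i = 2*t-1-l \<and> j = t-1-l) \<longleftrightarrow> l = t-1-j" using assms c2 by linarith
    ultimately show ?thesis using c2 by (auto simp: Za_def Fz_def)
  next
    case c3
    have "\<not> (i = l + t \<and> j = l)" using assms c3 by linarith
    moreover have "\<not> (i = 2*t-1-l \<and> j = t-1-l)" using assms c3 by linarith
    ultimately have "Za t l i j = (0::'a)" by (simp add: Za_def)
    moreover have "Fz t z i j = 0" using c3 by (auto simp: Fz_def)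
    ultimately show ?thesis by simp
  qed
qed

lemma finite_Lset: "finite (Lset t)"
  by (simp add: Lset_eq)

lemma sum_Ya: "(\<Sum>l\<in>Lset t. y l l * Ya t l i j) = Fy t y i j"
proof -
  define a where "a = (if 2*i+1 < t then i else t-1-i)"
  have "(\<Sum>l\<in>Lset t. y l l * Ya t l i j) = (\<Sum>l\<in>Lset t. if l = a then Fy t y i j else 0)"
    by (rule sum.cong) (simp_all add: a_def Ya_term Lset_def)
  also have "\<dots> = (if a \<in> Lset t then Fy t y i j else 0)" using finite_Lset by simp
  also have "\<dots> = Fy t y i j"
  proof -
    have "a \<notin> Lset t \<Longrightarrow> Fy t y i j = 0"
      unfolding a_def Lset_def Fy_def by auto
    then show ?thesis by auto
  qed
  finally show ?thesis .
qed

lemma sum_Za: "(\<Sum>l\<in>Lset t. z l l * Za t l i j) = Fz t z i j"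
proof -
  define a where "a = (if 2*j+1 < t then j else t-1-j)"
  have "(\<Sum>l\<in>Lset t. z l l * Za t l i j) = (\<Sum>l\<in>Lset t. if l = a then Fz t z i j else 0)"
    by (rule sum.cong) (simp_all add: a_def Za_term Lset_def)
  also have "\<dots> = (if a \<in> Lset t then Fz t z i j else 0)" using finite_Lset by simp
  also have "\<dots> = Fz t z i j"
  proof -
    have "a \<notin> Lset t \<Longrightarrow> Fz t z i j = 0"
      unfolding a_def Lset_def Fz_def by auto
    then show ?thesis by auto
  qed
  finally show ?thesis .
qed

definition Us :: "nat \<Rightarrow> 'f::field mat set" where
  "Us t = (\<lambda>(p,q). unitm p q) ` Pairs t"
definition G0n :: "nat \<Rightarrow> 'f::field mat set" where
  "G0n t = Ea t ` {..<t}"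
definition G1n :: "nat \<Rightarrow> 'f::field mat set" where
  "G1n t = Ya t ` Lset t \<union> Za t ` Lset t"
definition G0 :: "nat \<Rightarrow> 'f::field mat set" where
  "G0 t = G0n t \<union> Us t"
definition G1 :: "nat \<Rightarrow> 'f::field mat set" where
  "G1 t = G1n t \<union> Us t"

lemma inspan_mono: "inspan G M \<Longrightarrow> G \<subseteq> G' \<Longrightarrow> inspan G' M"
  unfolding inspan_def by blast

lemma S0_span:
  assumes "M \<in> S0 \<iota> t"
  shows "\<exists>X Y. inspan (G0 t) X \<and> inspan (G0 t) Y \<and> M = (\<lambda>i j. X i j + Y i j)"
proof -
  obtain x where x: "UT t x" "M = block t x (\<lambda>i j. 0) (\<lambda>i j. 0) (mneg (invol \<iota> t x))"
    using assms unfolding S0_def by auto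
  define X where "X = (\<lambda>i j. \<Sum>l<t. x l l * Ea t l i j)"
  define Y where "Y = (\<lambda>i j. M i j - F0 t x i j)"
  have "inspan (G0n t) X" unfolding X_def G0n_def by (rule inspan_nat) auto
  then have hX: "inspan (G0 t) X" by (rule inspan_mono) (auto simp: G0_def)
  have "inspan (Us t) Y" unfolding Us_def
  proof (rule rem_span, intro allI impI)
    fix i j assume "Y i j \<noteq> 0"
    then show "(i, j) \<in> Pairs t" using S0_rem[OF x(1)] x(2) unfolding Y_def Pairs_def by auto
  qed
  then have hY: "inspan (G0 t) Y" by (rule inspan_mono) (auto simp: G0_def)
  have "M = (\<lambda>i j. X i j + Y i j)" unfolding X_def Y_def by (simp add: sum_Ea)
  with hX hY show ?thesis by blast
qed

lemma S1_span:
  fixes M :: "'f::field_char_0 mat"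
  assumes "M \<in> S1 \<iota> t"
  shows "\<exists>X1 X2 Y. inspan (G1 t) X1 \<and> inspan (G1 t) X2 \<and> inspan (G1 t) Y \<and>
     M = (\<lambda>i j. X1 i j + X2 i j + Y i j)"
proof -
  obtain y z where yz: "y \<in> Rplus \<iota> t" "z \<in> Rminus \<iota> t" "M = block t (\<lambda>i j. 0) y z (\<lambda>i j. 0)"
    using assms unfolding S1_def by auto
  define X1 where "X1 = (\<lambda>i j. \<Sum>l\<in>Lset t. y l l * Ya t l i j)"
  define X2 where "X2 = (\<lambda>i j. \<Sum>l\<in>Lset t. z l l * Za t l i j)"
  define Y where "Y = (\<lambda>i j. M i j - F1 t y z i j)"
  have "inspan (G1n t) X1" unfolding X1_def G1n_def by (rule inspan_nat) (auto simp: finite_Lset)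
  then have h1: "inspan (G1 t) X1" by (rule inspan_mono) (auto simp: G1_def)
  have "inspan (G1n t) X2" unfolding X2_def G1n_def by (rule inspan_nat) (auto simp: finite_Lset)
  then have h2: "inspan (G1 t) X2" by (rule inspan_mono) (auto simp: G1_def)
  have "inspan (Us t) Y" unfolding Us_def
  proof (rule rem_span, intro allI impI)
    fix i j assume "Y i j \<noteq> 0"
    then show "(i, j) \<in> Pairs t" using S1_rem[OF yz(1,2)] yz(3) unfolding Y_def Pairs_def by auto
  qed
  then have hY: "inspan (G1 t) Y" by (rule inspan_mono) (auto simp: G1_def)
  have "M = (\<lambda>i j. X1 i j + X2 i j + Y i j)" unfolding X1_def X2_def Y_def
    by (simp add: sum_Ya sum_Za F1_split)
  with h1 h2 hY show ?thesis by blast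
qed

lemma QQ_unit: "(p, q) \<in> Pairs t \<Longrightarrow> QQ t 1 (unitm p q)"
  unfolding QQ_def unitm_def Pairs_def by auto

lemma QQ1_0: "QQ t 1 M \<Longrightarrow> QQ t 0 M"
  unfolding QQ_def by fastforce

lemma QQ_Us: "g \<in> Us t \<Longrightarrow> QQ t 1 g"
  unfolding Us_def using QQ_unit by auto

lemma QQ_Ea: "l < t \<Longrightarrow> QQ t 0 (Ea t l)"
  unfolding QQ_def Ea_def by auto

lemma QQ_Ya: "l \<in> Lset t \<Longrightarrow> QQ t 0 (Ya t l)"
proof -
  assume l: "l \<in> Lset t"
  then have l2: "2*l+1 < t" by (simp add: Lset_def)
  have a: "psi t (l + t) = 2 * l"
  proof (rule psi_hi_eq)
    show "l < t" using l2 by simp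
    show "\<not> (odd t \<and> l = t div 2)"
    proof
      assume h: "odd t \<and> l = t div 2"
      then have "2 * (t div 2) + 1 = t" using odd_two_times_div_two_succ by blast
      with h l2 show False by linarith
    qed
  qed
  have b: "psi t (t-1-l) = 2*(t-1-l)" using l2 by (intro psi_lo) auto
  have c: "2*(t-1-l) \<le> psi t (2*t-1-l)" using psi_hi[of t "2*t-1-l"] l2 by auto
  show ?thesis unfolding QQ_def Ya_def using a b c l2 psi_lo[of l t] by auto
qed

lemma QQ_Za: "l \<in> Lset t \<Longrightarrow> QQ t 0 (Za t l)"
proof -
  assume l: "l \<in> Lset t"
  then have l2: "2*l+1 < t" by (simp add: Lset_def)
  have a: "psi t (l + t) = 2 * l"
  proof (rule psi_hi_eq)
    show "l < t" using l2 by simp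
    show "\<not> (odd t \<and> l = t div 2)"
    proof
      assume h: "odd t \<and> l = t div 2"
      then have "2 * (t div 2) + 1 = t" using odd_two_times_div_two_succ by blast
      with h l2 show False by linarith
    qed
  qed
  have b: "psi t (t-1-l) = 2*(t-1-l)" using l2 by (intro psi_lo) auto
  have c: "psi t ((t-1-l) + t) = 2*(t-1-l)"
  proof (rule psi_hi_eq)
    show "t-1-l < t" using l2 by simp
    show "\<not> (odd t \<and> t-1-l = t div 2)"
    proof
      assume h: "odd t \<and> t-1-l = t div 2"
      then have "2 * (t div 2) + 1 = t" using odd_two_times_div_two_succ by blast
      with h l2 show False by linarith
    qed
  qed
  have e: "(t-1-l) + t = 2*t-1-l" using l2 by auto
  show ?thesis unfolding QQ_def Za_def using a b c e l2 psi_lo[of l t] by auto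
qed

lemma QQ_G0: "g \<in> G0 t \<Longrightarrow> QQ t 0 g"
  unfolding G0_def G0n_def using QQ_Ea QQ_Us QQ1_0 by blast

lemma QQ_G1: "g \<in> G1 t \<Longrightarrow> QQ t 0 g"
  unfolding G1_def G1n_def using QQ_Ya QQ_Za QQ_Us QQ1_0 by blast

lemma finite_Us: "finite (Us t)"
  unfolding Us_def using finite_Pairs by simp

lemma finite_G0: "finite (G0 t)"
  unfolding G0_def G0n_def using finite_Us by simp

lemma finite_G1: "finite (G1 t)"
  unfolding G1_def G1n_def using finite_Us finite_Lset by simp

lemma card_G0n: "card (G0n t) \<le> t"
  unfolding G0n_def using card_image_le[of "{..<t}" "Ea t"] by simp

lemma card_G1n: "card (G1n t :: 'f::field mat set) \<le> 2 * (t div 2)"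
proof -
  have "card (G1n t :: 'f mat set) \<le> card (Ya t ` Lset t :: 'f mat set) + card (Za t ` Lset t :: 'f mat set)"
    unfolding G1n_def by (rule card_Un_le)
  also have "\<dots> \<le> card (Lset t) + card (Lset t)"
    using card_image_le[OF finite_Lset] by (intro add_mono) auto
  finally show ?thesis by (simp add: Lset_eq)
qed

lemma G0_nonspec: "g \<in> G0 t \<Longrightarrow> \<not> QQ t 1 g \<Longrightarrow> g \<in> G0n t"
  unfolding G0_def using QQ_Us by blast

lemma G1_nonspec: "g \<in> G1 t \<Longrightarrow> \<not> QQ t 1 g \<Longrightarrow> g \<in> G1n t"
  unfolding G1_def using QQ_Us by blast

definition Gsel :: "nat \<Rightarrow> nat \<Rightarrow> nat \<Rightarrow> 'f::field mat set" where
  "Gsel t k i = (if i < k then G0 t else G1 t)"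

definition Good :: "nat \<Rightarrow> nat \<Rightarrow> nat \<Rightarrow> (nat \<Rightarrow> 'f::field mat) set" where
  "Good t k n = {\<sigma> \<in> PiE {..<n} (Gsel t k). card {i\<in>{..<n}. QQ t 1 (\<sigma> i)} < 2*t}"

lemma MLmon_leaves: "m \<in> MLmon n \<Longrightarrow> set (leaves m) = {..<n} \<and> distinct (leaves m)"
  unfolding MLmon_def by (simp add: atLeast0LessThan)

lemma QQ_Gsel: "g \<in> Gsel t k i \<Longrightarrow> QQ t 0 g"
  by (cases "i < k") (simp_all add: Gsel_def QQ_G0 QQ_G1)

lemma evm_QQ_n:
  assumes "m \<in> MLmon n" "\<forall>i<n. s i \<in> Gsel t k i"
  shows "QQ t (card {i\<in>{..<n}. QQ t 1 (s i)}) (evm (2*t) k s m)"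
proof -
  have L: "set (leaves m) = {..<n}" "distinct (leaves m)" using MLmon_leaves[OF assms(1)] by auto
  have "\<forall>i\<in>set (leaves m). QQ t 0 (s i)"
  proof
    fix i assume "i \<in> set (leaves m)"
    then have "i < n" using L(1) by auto
    then show "QQ t 0 (s i)" using assms(2) QQ_Gsel by blast
  qed
  from evm_QQ[OF this, of k]
  have "QQ t (length (filter (\<lambda>i. QQ t 1 (s i)) (leaves m))) (evm (2*t) k s m)" .
  moreover have "length (filter (\<lambda>i. QQ t 1 (s i)) (leaves m)) = card {i\<in>{..<n}. QQ t 1 (s i)}"
  proof -
    have "length (filter (\<lambda>i. QQ t 1 (s i)) (leaves m)) = card (set (filter (\<lambda>i. QQ t 1 (s i)) (leaves m)))"
      by (rule distinct_card[OF distinct_filter[OF L(2)], symmetric])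
    also have "set (filter (\<lambda>i. QQ t 1 (s i)) (leaves m)) = {i\<in>{..<n}. QQ t 1 (s i)}"
      using L(1) by auto
    finally show ?thesis .
  qed
  ultimately show ?thesis by simp
qed

lemma evm_bad_zero:
  assumes "m \<in> MLmon n" "\<forall>i<n. s i \<in> Gsel t k i" "2*t \<le> card {i\<in>{..<n}. QQ t 1 (s i)}"
  shows "evm (2*t) k s m = (\<lambda>i j. 0)"
  using QQ_big_zero[OF evm_QQ_n[OF assms(1,2)] assms(3)] .

lemma evm_supp:
  assumes "m \<in> MLmon n" "\<forall>i<n. s i \<in> Gsel t k i" "evm (2*t) k s m i j \<noteq> 0"
  shows "i < 2*t \<and> j < 2*t"
  using evm_QQ_n[OF assms(1,2)] assms(3) unfolding QQ_def by blast

lemma evalP_restrict: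
  "evalP N k n (restrict s {..<n}) f = evalP N k n s f"
  unfolding evalP_def
proof (intro ext sum.cong refl)
  fix i j m assume "m \<in> MLmon n"
  then have "evm N k (restrict s {..<n}) m = evm N k s m" by (intro evm_cong) (auto simp: MLmon_def)
  then show "f m * evm N k (restrict s {..<n}) m i j = f m * evm N k s m i j" by simp
qed

lemma evalP_zero_upd:
  assumes "r < n"
  shows "evalP N k n (s(r := (\<lambda>i j. 0))) f = (\<lambda>i j. (0::'f::field))"
proof -
  let ?E = "evalP N k n (s(r := (\<lambda>i j. 0))) f"
  have "evalP N k n (s(r := (\<lambda>i j. 1 * (0::'f) + 0))) f = (\<lambda>i j. 1 * ?E i j + ?E i j)"
    by (rule evalP_lin_s[OF assms])
  then have "?E = (\<lambda>i j. ?E i j + ?E i j)" by simp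
  then have "\<And>i j. ?E i j = ?E i j + ?E i j" by metis
  then show ?thesis by (intro ext) (metis add.right_neutral add_left_cancel)
qed

lemma span_V:
  assumes "r < n" "\<forall>g\<in>G. evalP N k n (s(r := g)) f = (\<lambda>i j. 0)" "inspan G M"
  shows "evalP N k n (s(r := M)) f = (\<lambda>i j. (0::'f::field))"
proof -
  obtain I :: "(nat \<times> nat) set" and \<phi> c where I: "finite I" "\<phi> ` I \<subseteq> G" "M = (\<lambda>i j. \<Sum>x\<in>I. c x * \<phi> x i j)"
    using assms(3) unfolding inspan_def by blast
  have "\<phi> ` I \<subseteq> G \<longrightarrow> evalP N k n (s(r := (\<lambda>i j. \<Sum>x\<in>I. c x * \<phi> x i j))) f = (\<lambda>i j. (0::'f))"
    using I(1)
  proof (induction I rule: finite_induct)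
    case empty
    have "(\<lambda>i j. \<Sum>x\<in>{}. c x * \<phi> x i j) = (\<lambda>i j. (0::'f))" by simp
    then show ?case by (simp only: evalP_zero_upd[OF assms(1)] simp_thms)
  next
    case (insert x I)
    show ?case
    proof
      assume h: "\<phi> ` insert x I \<subseteq> G"
      have e: "(\<lambda>i j. \<Sum>y\<in>insert x I. c y * \<phi> y i j) = (\<lambda>i j. c x * \<phi> x i j + (\<Sum>y\<in>I. c y * \<phi> y i j))"
        using insert.hyps by simp
      have "evalP N k n (s(r := (\<lambda>i j. c x * \<phi> x i j + (\<Sum>y\<in>I. c y * \<phi> y i j)))) f
          = (\<lambda>i j. c x * evalP N k n (s(r := \<phi> x)) f i j + evalP N k n (s(r := (\<lambda>i j. \<Sum>y\<in>I. c y * \<phi> y i j))) f i j)"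
        by (rule evalP_lin_s[OF assms(1)])
      also have "\<dots> = (\<lambda>i j. 0)"
      proof -
        have a: "evalP N k n (s(r := \<phi> x)) f = (\<lambda>i j. 0)" using h assms(2) by auto
        have b: "evalP N k n (s(r := (\<lambda>i j. \<Sum>y\<in>I. c y * \<phi> y i j))) f = (\<lambda>i j. 0)"
        proof -
          have "\<phi> ` I \<subseteq> G" using h by auto
          then show ?thesis by (rule mp[OF insert.IH])
        qed
        show ?thesis by (simp only: a b) simp
      qed
      finally show "evalP N k n (s(r := (\<lambda>i j. \<Sum>y\<in>insert x I. c y * \<phi> y i j))) f = (\<lambda>i j. 0)"
        unfolding e .
    qed
  qed
  then show ?thesis using I by simp
qed

lemma closed_add:
  assumes "r < n" "evalP N k n (s(r := X)) f = (\<lambda>i j. 0)" "evalP N k n (s(r := Y)) f = (\<lambda>i j. (0::'f::field))"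
  shows "evalP N k n (s(r := (\<lambda>i j. X i j + Y i j))) f = (\<lambda>i j. 0)"
  using evalP_lin_s[OF assms(1), where a=1 and X=X and Y=Y and s=s and N=N and k=k and f=f] assms(2,3) by simp

lemma ident_crit:
  fixes f :: "mon \<Rightarrow> 'f::field_char_0"
  assumes fP: "f \<in> Ppoly n"
    and good: "\<forall>\<sigma>\<in>Good t k n. evalP (2*t) k n \<sigma> f = (\<lambda>i j. 0)"
  shows "graded_identity (2*t) (S0 \<iota> t) (S1 \<iota> t) k n f"
proof -
  have base: "evalP (2*t) k n s f = (\<lambda>i j. 0)" if hs: "\<forall>i<n. s i \<in> Gsel t k i" for s
  proof (cases "card {i\<in>{..<n}. QQ t 1 (s i)} < 2*t")
    case True
    have e: "{i\<in>{..<n}. QQ t 1 (restrict s {..<n} i)} = {i\<in>{..<n}. QQ t 1 (s i)}" by auto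
    have "restrict s {..<n} \<in> Good t k n" unfolding Good_def using hs True e by auto
    then show ?thesis using good evalP_restrict by metis
  next
    case False
    then have "\<And>m. m \<in> MLmon n \<Longrightarrow> evm (2*t) k s m = (\<lambda>i j. 0)"
      using evm_bad_zero[OF _ hs] by simp
    then show ?thesis unfolding evalP_def by simp
  qed
  have step: "\<forall>s. (\<forall>i<n. (i < r \<longrightarrow> s i \<in> (if i < k then S0 \<iota> t else S1 \<iota> t)) \<and>
                      (r \<le> i \<longrightarrow> s i \<in> Gsel t k i)) \<longrightarrow> evalP (2*t) k n s f = (\<lambda>i j. 0)" for r
  proof (induction r)
    case 0
    then show ?case using base by auto
  next
    case (Suc r)
    show ?case
    proof (intro allI impI)
      fix s :: "nat \<Rightarrow> 'f mat"
      assume hs: "\<forall>i<n. (i < Suc r \<longrightarrow> s i \<in> (if i < k then S0 \<iota> t else S1 \<iota> t)) \<and>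
                      (Suc r \<le> i \<longrightarrow> s i \<in> Gsel t k i)"
      show "evalP (2*t) k n s f = (\<lambda>i j. 0)"
      proof (cases "r < n")
        case False
        have "\<forall>i<n. (i < r \<longrightarrow> s i \<in> (if i < k then S0 \<iota> t else S1 \<iota> t)) \<and>
                      (r \<le> i \<longrightarrow> s i \<in> Gsel t k i)"
          using hs False by auto
        then show ?thesis using Suc.IH by blast
      next
        case True
        have gV: "\<forall>g\<in>(Gsel t k r :: 'f mat set). evalP (2*t) k n (s(r := g)) f = (\<lambda>i j. 0)"
        proof
          fix g :: "'f mat" assume g: "g \<in> Gsel t k r"
          have "\<forall>i<n. (i < r \<longrightarrow> (s(r := g)) i \<in> (if i < k then S0 \<iota> t else S1 \<iota> t)) \<and>
                      (r \<le> i \<longrightarrow> (s(r := g)) i \<in> Gsel t k i)"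
            using hs g by auto
          then show "evalP (2*t) k n (s(r := g)) f = (\<lambda>i j. 0)" using Suc.IH by blast
        qed
        have sr: "s r \<in> (if r < k then S0 \<iota> t else S1 \<iota> t)" using hs True by auto
        have "evalP (2*t) k n (s(r := s r)) f = (\<lambda>i j. 0)"
        proof (cases "r < k")
          case True
          then have "s r \<in> S0 \<iota> t" using sr by simp
          from S0_span[OF this] obtain X Y where XY: "inspan (G0 t) X" "inspan (G0 t) Y"
            "s r = (\<lambda>i j. X i j + Y i j)" by blast
          have G: "(Gsel t k r :: 'f mat set) = G0 t" using True by (simp add: Gsel_def)
          have "evalP (2*t) k n (s(r := (\<lambda>i j. X i j + Y i j))) f = (\<lambda>i j. 0)"
            by (rule closed_add[OF \<open>r < n\<close>]; rule span_V[OF \<open>r < n\<close>]) (use gV G XY in auto)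
          then show ?thesis using XY(3) by simp
        next
          case False
          then have "s r \<in> S1 \<iota> t" using sr by simp
          from S1_span[OF this] obtain X1 X2 Y where XY: "inspan (G1 t) X1" "inspan (G1 t) X2"
            "inspan (G1 t) Y" "s r = (\<lambda>i j. X1 i j + X2 i j + Y i j)" by blast
          have G: "(Gsel t k r :: 'f mat set) = G1 t" using False by (simp add: Gsel_def)
          have a: "evalP (2*t) k n (s(r := X1)) f = (\<lambda>i j. 0)"
            by (rule span_V[OF \<open>r < n\<close>]) (use gV G XY in auto)
          have b: "evalP (2*t) k n (s(r := X2)) f = (\<lambda>i j. 0)"
            by (rule span_V[OF \<open>r < n\<close>]) (use gV G XY in auto)
          have c: "evalP (2*t) k n (s(r := Y)) f = (\<lambda>i j. 0)"
            by (rule span_V[OF \<open>r < n\<close>]) (use gV G XY in auto)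
          have "evalP (2*t) k n (s(r := (\<lambda>i j. X1 i j + X2 i j))) f = (\<lambda>i j. 0)"
            by (rule closed_add[OF \<open>r < n\<close> a b])
          then have "evalP (2*t) k n (s(r := (\<lambda>i j. (\<lambda>i j. X1 i j + X2 i j) i j + Y i j))) f = (\<lambda>i j. 0)"
            by (rule closed_add[OF \<open>r < n\<close> _ c])
          then show ?thesis using XY(4) by simp
        qed
        then show ?thesis by simp
      qed
    qed
  qed
  show ?thesis
    unfolding graded_identity_def
  proof (intro conjI allI impI)
    show "f \<in> Ppoly n" by (rule fP)
    fix s :: "nat \<Rightarrow> 'f mat"
    assume "(\<forall>i<k. s i \<in> S0 \<iota> t) \<and> (\<forall>i. k \<le> i \<and> i < n \<longrightarrow> s i \<in> S1 \<iota> t)"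
    then have "\<forall>i<n. (i < n \<longrightarrow> s i \<in> (if i < k then S0 \<iota> t else S1 \<iota> t)) \<and>
                      (n \<le> i \<longrightarrow> s i \<in> Gsel t k i)" by auto
    then show "evalP (2*t) k n s f = (\<lambda>i j. 0)" using step[of n] by blast
  qed
qed

lemma finite_Good: "finite (Good t k n :: (nat \<Rightarrow> 'f::field mat) set)"
proof -
  have "finite (PiE {..<n} (Gsel t k) :: (nat \<Rightarrow> 'f mat) set)"
    by (rule finite_PiE) (auto simp: Gsel_def finite_G0 finite_G1)
  then show ?thesis unfolding Good_def by simp
qed

lemma Good_G: "\<sigma> \<in> Good t k n \<Longrightarrow> \<forall>i<n. \<sigma> i \<in> Gsel t k i"
  unfolding Good_def by auto

lemma indep_bound:
  fixes B :: "(mon \<Rightarrow> 'f::field_char_0) set"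
  assumes "indep_mod (2*t) (S0 \<iota> t) (S1 \<iota> t) k n B"
  shows "card B \<le> card (Good t k n :: (nat \<Rightarrow> 'f mat) set) * (2*t) * (2*t)"
proof -
  let ?D = "(Good t k n :: (nat \<Rightarrow> 'f mat) set) \<times> ({..<2*t} \<times> {..<2*t})"
  have BP: "B \<subseteq> Ppoly n" "finite B" and ind: "\<forall>a. graded_identity (2*t) (S0 \<iota> t) (S1 \<iota> t) k n (\<lambda>m. \<Sum>b\<in>B. a b * b m) \<longrightarrow> (\<forall>b\<in>B. a b = 0)"
    using assms unfolding indep_mod_def by auto
  define v where "v b d = (case d of (\<sigma>, i, j) \<Rightarrow> evalP (2*t) k n \<sigma> b i j)" for b :: "mon \<Rightarrow> 'f" and d
  have "card B \<le> card ?D"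
  proof (rule indep_card[where v=v and D="(Good t k n :: (nat \<Rightarrow> 'f mat) set) \<times> ({..<2*t} \<times> {..<2*t})"])
    show "finite ?D" by (intro finite_cartesian_product finite_Good finite_lessThan)
    show "finite B" by (rule BP(2))
    show "\<forall>a. (\<forall>d\<in>?D. (\<Sum>b\<in>B. a b * v b d) = 0) \<longrightarrow> (\<forall>b\<in>B. a b = 0)"
    proof (intro allI impI)
      fix a assume h: "\<forall>d\<in>?D. (\<Sum>b\<in>B. a b * v b d) = 0"
      let ?f = "\<lambda>m. \<Sum>b\<in>B. a b * b m"
      have fP: "?f \<in> Ppoly n"
        unfolding Ppoly_def
      proof (intro CollectI allI impI)
        fix m assume m: "m \<notin> MLmon n"
        have "\<forall>b\<in>B. b m = 0" using BP(1) m unfolding Ppoly_def by blast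
        then show "(\<Sum>b\<in>B. a b * b m) = 0" by (intro sum.neutral) simp
      qed
      have "graded_identity (2*t) (S0 \<iota> t) (S1 \<iota> t) k n ?f"
      proof (rule ident_crit[OF fP], intro ballI ext)
        fix \<sigma> :: "nat \<Rightarrow> 'f mat" and i j
        assume \<sigma>: "\<sigma> \<in> Good t k n"
        have "evalP (2*t) k n \<sigma> ?f i j = (\<Sum>b\<in>B. a b * evalP (2*t) k n \<sigma> b i j)"
          by (simp add: evalP_lin_f)
        also have "\<dots> = 0"
        proof (cases "i < 2*t \<and> j < 2*t")
          case True
          then have "(\<sigma>, i, j) \<in> ?D" using \<sigma> by auto
          then show ?thesis using h by (simp add: v_def)
        next
          case False
          have "evalP (2*t) k n \<sigma> b i j = 0" for b
            unfolding evalP_def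
          proof (rule sum.neutral, intro ballI)
            fix m assume m: "m \<in> MLmon n"
            have "evm (2*t) k \<sigma> m i j = 0"
              using evm_supp[OF m Good_G[OF \<sigma>]] False by blast
            then show "b m * evm (2*t) k \<sigma> m i j = 0" by simp
          qed
          then show ?thesis by simp
        qed
        finally show "evalP (2*t) k n \<sigma> ?f i j = 0" .
      qed
      then show "\<forall>b\<in>B. a b = 0" using ind by blast
    qed
  qed
  also have "card ?D = card (Good t k n :: (nat \<Rightarrow> 'f mat) set) * (2*t) * (2*t)"
    by (simp add: card_cartesian_product)
  finally show ?thesis .
qed

lemma codim_le:
  "codim (2*t) (S0 \<iota> t :: 'f::field_char_0 mat set) (S1 \<iota> t) k n
     \<le> card (Good t k n :: (nat \<Rightarrow> 'f mat) set) * (2*t) * (2*t)"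
proof -
  let ?b = "card (Good t k n :: (nat \<Rightarrow> 'f mat) set) * (2*t) * (2*t)"
  let ?A = "{card B |B. indep_mod (2*t) (S0 \<iota> t :: 'f mat set) (S1 \<iota> t) k n B}"
  have le: "\<forall>x\<in>?A. x \<le> ?b" using indep_bound by blast
  have fin: "finite ?A" by (rule finite_subset[of _ "{..?b}"]) (use le in auto)
  have "indep_mod (2*t) (S0 \<iota> t :: 'f mat set) (S1 \<iota> t) k n {}"
    unfolding indep_mod_def by simp
  then have ne: "?A \<noteq> {}" by blast
  show ?thesis unfolding codim_def using Max.boundedI[OF fin ne] le by blast
qed

lemma card_Tset: "card {T. T \<subseteq> {..<n::nat} \<and> card T \<le> K} \<le> (n+1)^K"
proof -
  let ?L = "{xs. set xs \<subseteq> {..<n+1} \<and> length xs = K}"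
  have sub: "{T. T \<subseteq> {..<n} \<and> card T \<le> K} \<subseteq> (\<lambda>xs. set xs - {n}) ` ?L"
  proof
    fix T assume "T \<in> {T. T \<subseteq> {..<n} \<and> card T \<le> K}"
    then have T: "T \<subseteq> {..<n}" "card T \<le> K" by auto
    have fT: "finite T" using T(1) finite_subset by blast
    define xs where "xs = sorted_list_of_set T @ replicate (K - card T) n"
    have "set xs \<subseteq> T \<union> {n}" using fT by (auto simp: xs_def)
    then have "set xs \<subseteq> {..<n+1}" using T(1) by auto
    moreover have "length xs = K" using fT T(2) by (simp add: xs_def)
    moreover have "set xs - {n} = T" using fT T(1) by (auto simp: xs_def)
    ultimately show "T \<in> (\<lambda>xs. set xs - {n}) ` ?L" by force
  qed
  have "card {T. T \<subseteq> {..<n} \<and> card T \<le> K} \<le> card ((\<lambda>xs. set xs - {n}) ` ?L)"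
    by (rule card_mono[OF _ sub]) (simp add: finite_lists_length_eq)
  also have "\<dots> \<le> card ?L" by (rule card_image_le) (simp add: finite_lists_length_eq)
  also have "\<dots> = (n+1)^K" by (simp add: card_lists_length_eq)
  finally show ?thesis .
qed

lemma finite_G0n: "finite (G0n t)" unfolding G0n_def by simp
lemma finite_G1n: "finite (G1n t)" unfolding G1n_def using finite_Lset by simp

definition Gn :: "nat \<Rightarrow> nat \<Rightarrow> nat \<Rightarrow> 'f::field mat set" where
  "Gn t k i = (if i < k then G0n t else G1n t)"

definition aa :: "nat \<Rightarrow> nat \<Rightarrow> nat \<Rightarrow> nat" where
  "aa t k i = (if i < k then t else 2 * (t div 2))"

lemma Good_sub:
  "(Good t k n :: (nat \<Rightarrow> 'f::field mat) set) \<subseteq>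
    (\<Union>T\<in>{T. T \<subseteq> {..<n} \<and> card T \<le> 2*t-1}. PiE {..<n} (\<lambda>i. if i \<in> T then G0 t \<union> G1 t else Gn t k i))"
proof
  fix \<sigma> :: "nat \<Rightarrow> 'f mat" assume \<sigma>: "\<sigma> \<in> Good t k n"
  let ?T = "{i\<in>{..<n}. QQ t 1 (\<sigma> i)}"
  have p: "\<sigma> \<in> PiE {..<n} (Gsel t k)" and c: "card ?T < 2*t" using \<sigma> unfolding Good_def by simp_all
  have "?T \<subseteq> {..<n}" by blast
  moreover have "card ?T \<le> 2*t-1" using c by linarith
  ultimately have T: "?T \<in> {T. T \<subseteq> {..<n} \<and> card T \<le> 2*t-1}" by blast
  have "\<forall>i\<in>{..<n}. \<sigma> i \<in> (if i \<in> ?T then G0 t \<union> G1 t else Gn t k i)"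
  proof
    fix i assume i: "i \<in> {..<n}"
    have g: "\<sigma> i \<in> Gsel t k i" using p i by (simp add: PiE_iff)
    show "\<sigma> i \<in> (if i \<in> ?T then G0 t \<union> G1 t else Gn t k i)"
    proof (cases "QQ t 1 (\<sigma> i)")
      case True
      have "Gsel t k i \<subseteq> (G0 t \<union> G1 t :: 'f mat set)" by (simp add: Gsel_def)
      moreover have "i \<in> ?T" using i True by blast
      ultimately show ?thesis using g by auto
    next
      case False
      have ni: "i \<notin> ?T" using False by blast
      have gn: "\<sigma> i \<in> Gn t k i"
      proof (cases "i < k")
        case True
        then show ?thesis using g G0_nonspec[OF _ False] by (simp add: Gsel_def Gn_def)
      next
        case False
        then show ?thesis using g G1_nonspec[OF _ \<open>\<not> QQ t 1 (\<sigma> i)\<close>] by (simp add: Gsel_def Gn_def)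
      qed
      show ?thesis using gn by (subst if_not_P[OF ni])
    qed
  qed
  moreover have "\<sigma> \<in> extensional {..<n}" using p by (simp add: PiE_iff)
  ultimately have "\<sigma> \<in> PiE {..<n} (\<lambda>i. if i \<in> ?T then G0 t \<union> G1 t else Gn t k i)"
    by (simp add: PiE_iff)
  then show "\<sigma> \<in> (\<Union>T\<in>{T. T \<subseteq> {..<n} \<and> card T \<le> 2*t-1}. PiE {..<n} (\<lambda>i. if i \<in> T then G0 t \<union> G1 t else Gn t k i))"
    using T by blast
qed

lemma prod_aa: "k \<le> n \<Longrightarrow> (\<Prod>i<n. aa t k i) = t^k * (2 * (t div 2))^(n-k)"
proof -
  assume kn: "k \<le> n"
  have "{..<n} = {..<k} \<union> {k..<n}" using kn by auto
  then have "(\<Prod>i<n. aa t k i) = (\<Prod>i<k. aa t k i) * (\<Prod>i\<in>{k..<n}. aa t k i)"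
    by (simp add: prod.union_disjoint ivl_disj_int_one(2))
  also have "(\<Prod>i<k. aa t k i) = t^k" by (simp add: aa_def)
  also have "(\<Prod>i\<in>{k..<n}. aa t k i) = (2 * (t div 2))^(n-k)" by (simp add: aa_def)
  finally show ?thesis .
qed

lemma card_PiE_T:
  assumes t: "2 \<le> t" and T: "T \<subseteq> {..<n}" "card T \<le> K"
  shows "card (PiE {..<n} (\<lambda>i. if i \<in> T then G0 t \<union> G1 t else (Gn t k i :: 'f::field mat set)))
     \<le> (card (G0 t \<union> G1 t :: 'f mat set) + 1)^K * (\<Prod>i<n. aa t k i)"
proof -
  let ?c = "card (G0 t \<union> G1 t :: 'f mat set) + 1"
  have a1: "1 \<le> aa t k i" for i using t by (auto simp: aa_def)
  have "card (PiE {..<n} (\<lambda>i. if i \<in> T then G0 t \<union> G1 t else (Gn t k i :: 'f mat set)))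
      = (\<Prod>i<n. card (if i \<in> T then G0 t \<union> G1 t else (Gn t k i :: 'f mat set)))"
    by (simp add: card_PiE)
  also have "\<dots> \<le> (\<Prod>i<n. (if i \<in> T then ?c else 1) * aa t k i)"
  proof (rule prod_mono, intro conjI)
    fix i assume "i \<in> {..<n}"
    show "0 \<le> card (if i \<in> T then G0 t \<union> G1 t else (Gn t k i :: 'f mat set))" by simp
    show "card (if i \<in> T then G0 t \<union> G1 t else (Gn t k i :: 'f mat set)) \<le> (if i \<in> T then ?c else 1) * aa t k i"
    proof (cases "i \<in> T")
      case True
      have "card (G0 t \<union> G1 t :: 'f mat set) \<le> ?c" by simp
      also have "\<dots> = ?c * 1" by simp
      also have "\<dots> \<le> ?c * aa t k i" using a1[of i] by (rule mult_le_mono2)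
      finally show ?thesis using True by simp
    next
      case False
      have "card (Gn t k i :: 'f mat set) \<le> aa t k i"
        using card_G0n[of t] card_G1n[of t] by (auto simp: Gn_def aa_def)
      then show ?thesis using False by simp
    qed
  qed
  also have "\<dots> = (\<Prod>i<n. (if i \<in> T then ?c else 1)) * (\<Prod>i<n. aa t k i)"
    by (rule prod.distrib)
  also have "(\<Prod>i<n. (if i \<in> T then ?c else 1)) = ?c ^ card T"
  proof -
    have "(\<Prod>i<n. (if i \<in> T then ?c else 1)) = (\<Prod>i\<in>{..<n} \<inter> T. ?c)"
      by (rule prod.inter_restrict[symmetric]) simp
    also have "{..<n} \<inter> T = T" using T(1) by auto
    finally show ?thesis by simp
  qed
  also have "?c ^ card T \<le> ?c ^ K" using T(2) by (intro power_increasing) auto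
  finally show ?thesis by simp
qed

lemma card_Good:
  assumes t: "2 \<le> t" and kn: "k \<le> n"
  shows "card (Good t k n :: (nat \<Rightarrow> 'f::field mat) set)
     \<le> (n+1)^(2*t-1) * ((card (G0 t \<union> G1 t :: 'f mat set) + 1)^(2*t-1) * (t^k * (2 * (t div 2))^(n-k)))"
proof -
  let ?K = "2*t-1"
  let ?TS = "{T. T \<subseteq> {..<n} \<and> card T \<le> ?K}"
  let ?F = "\<lambda>T. PiE {..<n} (\<lambda>i. if i \<in> T then G0 t \<union> G1 t else (Gn t k i :: 'f mat set))"
  let ?B = "(card (G0 t \<union> G1 t :: 'f mat set) + 1)^?K * (t^k * (2 * (t div 2))^(n-k))"
  have fTS: "finite ?TS" by (rule finite_subset[of _ "Pow {..<n}"]) auto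
  have "card (Good t k n :: (nat \<Rightarrow> 'f mat) set) \<le> card (\<Union>T\<in>?TS. ?F T)"
  proof (rule card_mono[OF _ Good_sub])
    show "finite (\<Union>T\<in>?TS. ?F T)"
    proof (intro finite_UN_I[OF fTS] finite_PiE)
      fix T i
      have "finite (G0 t \<union> G1 t :: 'f mat set)" using finite_G0 finite_G1 by blast
      moreover have "finite (Gn t k i :: 'f mat set)" by (cases "i < k") (simp_all add: Gn_def finite_G0n finite_G1n)
      ultimately show "finite (if i \<in> T then G0 t \<union> G1 t else (Gn t k i :: 'f mat set))" by simp
    qed simp
  qed
  also have "\<dots> \<le> (\<Sum>T\<in>?TS. card (?F T))" by (rule card_UN_le[OF fTS])
  also have "\<dots> \<le> (\<Sum>T\<in>?TS. ?B)"
  proof (rule sum_mono)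
    fix T assume "T \<in> ?TS"
    then have "card (?F T) \<le> (card (G0 t \<union> G1 t :: 'f mat set) + 1)^?K * (\<Prod>i<n. aa t k i)"
      using card_PiE_T[OF t] by auto
    then show "card (?F T) \<le> ?B" using prod_aa[OF kn] by simp
  qed
  also have "\<dots> = card ?TS * ?B" by simp
  also have "\<dots> \<le> (n+1)^?K * ?B" using card_Tset[of n ?K] by (intro mult_right_mono) auto
  finally show ?thesis .
qed

lemma cgr_bound:
  assumes t: "2 \<le> t"
  shows "cgr (2*t) (S0 \<iota> t :: 'f::field_char_0 mat set) (S1 \<iota> t) n
     \<le> (2*t*(2*t)) * (n+1)^(2*t-1) * (card (G0 t \<union> G1 t :: 'f mat set) + 1)^(2*t-1)
        * (t + 2 * (t div 2))^n"
proof -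
  let ?K = "2*t-1"
  let ?g = "card (G0 t \<union> G1 t :: 'f mat set) + 1"
  let ?b = "2 * (t div 2)"
  have "cgr (2*t) (S0 \<iota> t :: 'f mat set) (S1 \<iota> t) n
      = (\<Sum>k\<le>n. (n choose k) * codim (2*t) (S0 \<iota> t :: 'f mat set) (S1 \<iota> t) k n)"
    by (simp add: cgr_def)
  also have "\<dots> \<le> (\<Sum>k\<le>n. (n choose k) * ((2*t*(2*t)) * (n+1)^?K * ?g^?K * (t^k * ?b^(n-k))))"
  proof (rule sum_mono)
    fix k assume k: "k \<in> {..n}"
    have "codim (2*t) (S0 \<iota> t :: 'f mat set) (S1 \<iota> t) k n \<le> card (Good t k n :: (nat \<Rightarrow> 'f mat) set) * (2*t) * (2*t)"
      by (rule codim_le)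
    also have "\<dots> \<le> ((n+1)^?K * (?g^?K * (t^k * ?b^(n-k)))) * (2*t) * (2*t)"
      using card_Good[OF t, of k n, where 'f='f] k by (intro mult_right_mono) auto
    also have "\<dots> = (2*t*(2*t)) * (n+1)^?K * ?g^?K * (t^k * ?b^(n-k))"
      by (simp add: algebra_simps)
    finally show "(n choose k) * codim (2*t) (S0 \<iota> t :: 'f mat set) (S1 \<iota> t) k n
       \<le> (n choose k) * ((2*t*(2*t)) * (n+1)^?K * ?g^?K * (t^k * ?b^(n-k)))"
      by (rule mult_left_mono) simp
  qed
  also have "\<dots> = (2*t*(2*t)) * (n+1)^?K * ?g^?K * (\<Sum>k\<le>n. (n choose k) * t^k * ?b^(n-k))"
    by (simp add: sum_distrib_left algebra_simps)
  also have "(\<Sum>k\<le>n. (n choose k) * t^k * ?b^(n-k)) = (t + ?b)^n"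
    by (simp add: binomial)
  finally show ?thesis .
qed

lemma cgr_bound2:
  assumes t: "2 \<le> t" and n: "1 \<le> n"
  shows "real (cgr (2*t) (S0 \<iota> t :: 'f::field_char_0 mat set) (S1 \<iota> t) n)
     \<le> real ((2*t*(2*t)) * 2^(2*t-1) * (card (G0 t \<union> G1 t :: 'f mat set) + 1)^(2*t-1))
        * real n ^ (2*t-1) * real (t + 2 * (t div 2)) ^ n"
proof -
  let ?K = "2*t-1"
  let ?g = "card (G0 t \<union> G1 t :: 'f mat set) + 1"
  let ?c = "t + 2 * (t div 2)"
  have "(n+1)^?K \<le> (2*n)^?K" using n by (intro power_mono) auto
  then have pn: "(n+1)^?K \<le> 2^?K * n^?K" by (simp add: power_mult_distrib)
  have "cgr (2*t) (S0 \<iota> t :: 'f mat set) (S1 \<iota> t) n \<le> (2*t*(2*t)) * (n+1)^?K * ?g^?K * ?c^n"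
    by (rule cgr_bound[OF t])
  also have "\<dots> \<le> (2*t*(2*t)) * (2^?K * n^?K) * ?g^?K * ?c^n"
    using pn by (intro mult_right_mono mult_left_mono) auto
  also have "\<dots> = ((2*t*(2*t)) * 2^?K * ?g^?K) * n^?K * ?c^n" by (simp add: algebra_simps)
  finally have "real (cgr (2*t) (S0 \<iota> t :: 'f mat set) (S1 \<iota> t) n) \<le> real (((2*t*(2*t)) * 2^?K * ?g^?K) * n^?K * ?c^n)"
    by (simp only: of_nat_le_iff)
  then show ?thesis by simp
qed

theorem proposition3:
  fixes t :: nat and \<iota> :: invkind
  assumes "t \<ge> 2"
    and "\<iota> = Symp \<longrightarrow> even t"
  shows "grexp_upper (2 * t) (S0 \<iota> t :: 'f::field_char_0 mat set) (S1 \<iota> t)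
           \<le> ereal (if even t then 2 * real t else 2 * real t - 1)"
proof -
  let ?K = "2*t-1"
  define C where "C = real ((2*t*(2*t)) * 2^(2*t-1) * (card (G0 t \<union> G1 t :: 'f mat set) + 1)^(2*t-1))"
  define c where "c = real (t + 2 * (t div 2))"
  have Cpos: "0 < C" using assms(1) unfolding C_def by simp
  have c0: "0 \<le> c" unfolding c_def by simp
  have ceq: "c = (if even t then 2 * real t else 2 * real t - 1)"
  proof (cases "even t")
    case True
    then have "2 * (t div 2) = t" by simp
    then show ?thesis using True unfolding c_def by simp
  next
    case False
    then have "2 * (t div 2) + 1 = t" by simp
    then have "real t + real (2 * (t div 2)) = 2 * real t - 1" by linarith
    then show ?thesis using False unfolding c_def by simp
  qed
  let ?f = "\<lambda>n. ereal (root n (real (cgr (2*t) (S0 \<iota> t :: 'f mat set) (S1 \<iota> t) n)))"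
  let ?h = "\<lambda>n. ereal (root n C * root n (real n) ^ ?K * c)"
  have ev: "eventually (\<lambda>n. ?f n \<le> ?h n) sequentially"
  proof (rule eventually_sequentiallyI[of 1])
    fix n :: nat assume n: "1 \<le> n"
    have "root n (real (cgr (2*t) (S0 \<iota> t :: 'f mat set) (S1 \<iota> t) n)) \<le> root n (C * real n ^ ?K * c ^ n)"
      using cgr_bound2[OF assms(1) n, of \<iota>, where 'f='f] n unfolding C_def c_def
      by (intro real_root_le_mono) auto
    also have "\<dots> = root n C * root n (real n) ^ ?K * c"
      using n c0 by (simp add: real_root_mult real_root_power real_root_power_cancel)
    finally show "?f n \<le> ?h n" by simp
  qed
  have "(\<lambda>n. root n C * root n (real n) ^ ?K * c) \<longlonglongrightarrow> 1 * 1 ^ ?K * c"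
    by (intro tendsto_mult tendsto_power LIMSEQ_root_const[OF Cpos] LIMSEQ_root tendsto_const)
  then have "?h \<longlonglongrightarrow> ereal c" by (simp add: tendsto_ereal)
  then have lh: "limsup ?h = ereal c" by (intro lim_imp_Limsup) simp_all
  have "grexp_upper (2 * t) (S0 \<iota> t :: 'f mat set) (S1 \<iota> t) = limsup ?f"
    by (simp add: grexp_upper_def)
  also have "\<dots> \<le> limsup ?h" by (rule Limsup_mono[OF ev])
  also have "\<dots> = ereal c" by (rule lh)
  finally show ?thesis using ceq by simp
qed

end
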